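(* Let $\Lambda=\lambda+\ell\Lambda_0+z\delta$ be a dominant weight (with $\lambda$ a dominant integral weight of the finite root system, $\ell\in\mathbb{N}$ its level, $z\in\mathbb{Z}$), let $x,y\in V_0$ and $u\in W_0$. Then $$\mathcal{L}_\Lambda(t_{x+y}u)=\mathcal{L}_\Lambda(t_xu)+\mathcal{L}_\Lambda(t_yu)+\mathcal{D}_\Lambda(u,x,y),\qquad \mathcal{D}_\Lambda(u,x,y)=h\ell\,(x|y)-\mathcal{L}_\lambda(u).$$ In particular, for every $0\le i\le n$, $$\mathcal{L}_{\Lambda_i}(t_xt_y)=\mathcal{L}_{\Lambda_i}(t_x)+\mathcal{L}_{\Lambda_i}(t_y)+h\frac{a_i^\vee}{a_0^\vee}(x|y).$$
   Context: Let $A=(a_{ij})_{0\le i,j\le n}$ be a generalized Cartan matrix of affine type with realization $\Delta=\{\alpha_0,\dots,\alpha_n\}\subset\mathfrak h^*$, $\Delta^\vee=\{\alpha_0^\vee,\dots,\alpha_n^\vee\}\subset\mathfrak h$, $\dim\mathfrak h=n+2$, $\langle\alpha_j,\alpha_i^\vee\rangle=a_{ij}$. Let $(a_0,\dots,a_n)$, $(a_0^\vee,\dots,a_n^\vee)$ be the primitive positive integer vectors in the kernels of $A$ and $A^T$; $h=\sum a_i$, $\delta=\sum a_i\alpha_i$, $c=\sum a_i^\vee\alpha_i^\vee$. $V_0=\bigoplus_{i=1}^n\mathbb{R}\alpha_i$ with the standard invariant symmetric form $(\cdot|\cdot)$ (with $(\alpha_i|\alpha_j)=a_i^\vee a_i^{-1}a_{ij}$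 for $i,j\ge1$, $(\delta|\cdot)$ vanishing on $V_0$ and $\delta$). $W_0=\langle s_1,\dots,s_n\rangle$ with $s_i(x)=x-\langle x,\alpha_i^\vee\rangle\alpha_i$. $\omega_i\in V_0$ are the finite fundamental weights, $\Lambda_i$ the affine fundamental weights ($\langle\Lambda_i,\alpha_j^\vee\rangle=\delta_{ij}$) with $\Lambda_i=\frac{a_i^\vee}{a_0^\vee}\Lambda_0+\omega_i$; $\rho^\vee\in\mathfrak h$ satisfies $\langle\alpha_i,\rho^\vee\rangle=1$ for all $i$. For $x\in V_0$, $t_x\in GL(\mathfrak h^* )$ is $t_x(v)=v+\langle v,c\rangle x-((v|x)+\frac12|x|^2\langle v,c\rangle)\delta$. For any $g\in GL(\mathfrak h^* )$ and weight $\mu$, $\mathcal{L}_\mu(g)=\langle\mu-g\mu,\rho^\vee\rangle$; in particular $\mathcal{L}_\lambda(u)=\langle\lambda-u\lambda,\rho^\vee\rangle$ for $u\in W_0$. The level of $\Lambda$ is $\ell=\langle\Lambda,c\rangle$.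
   Formalization: The label $a_0^\vee$ is assumed to equal 1, a hypothesis on the primitive kernel vector of $A^T$ absent from the context, and both the main identity and the formula for $\mathcal{L}_{\Lambda_i}$ rest on it. The paper assumes this as well. *)

theory Defs
  imports "HOL-Analysis.Analysis"
begin

text \<open>Indices of the affine Cartan matrix run over 0..n. The generalized Cartan
matrix is a function nat => nat => int, only its entries with indices at most n matter.\<close>

definition GCM :: "nat \<Rightarrow> (nat \<Rightarrow> nat \<Rightarrow> int) \<Rightarrow> bool" where
  "GCM n A \<longleftrightarrow> (\<forall>i\<le>n. A i i = 2) \<and> (\<forall>i\<le>n. \<forall>j\<le>n. i \<noteq> j \<longrightarrow> A i j \<le> 0)
     \<and> (\<forall>i\<le>n. \<forall>j\<le>n. A i j = 0 \<longleftrightarrow> A j i = 0)"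

definition indecomposable :: "nat \<Rightarrow> (nat \<Rightarrow> nat \<Rightarrow> int) \<Rightarrow> bool" where
  "indecomposable n A \<longleftrightarrow> \<not> (\<exists>I J. I \<noteq> {} \<and> J \<noteq> {} \<and> I \<inter> J = {} \<and> I \<union> J = {..n}
      \<and> (\<forall>i\<in>I. \<forall>j\<in>J. A i j = 0))"

text \<open>Affine type (Kac, Thm 4.3 (Aff)): indecomposable GCM of corank 1 with a positive
null vector u, and A v \<ge> 0 implies A v = 0.\<close>
definition affine_type :: "nat \<Rightarrow> (nat \<Rightarrow> nat \<Rightarrow> int) \<Rightarrow> bool" where
  "affine_type n A \<longleftrightarrow> GCM n A \<and> indecomposable n A \<and>
    (\<exists>u::nat \<Rightarrow> real. (\<forall>i\<le>n. u i > 0) \<and> (\<forall>i\<le>n. (\<Sum>j\<le>n. of_int (A i j) * u j) = 0)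
       \<and> (\<forall>v::nat \<Rightarrow> real. (\<forall>i\<le>n. (\<Sum>j\<le>n. of_int (A i j) * v j) = 0)
               \<longrightarrow> (\<exists>c. \<forall>i\<le>n. v i = c * u i))) \<and>
    (\<forall>v::nat \<Rightarrow> real. (\<forall>i\<le>n. (\<Sum>j\<le>n. of_int (A i j) * v j) \<ge> 0)
               \<longrightarrow> (\<forall>i\<le>n. (\<Sum>j\<le>n. of_int (A i j) * v j) = 0))"

definition null_labels :: "nat \<Rightarrow> (nat \<Rightarrow> nat \<Rightarrow> int) \<Rightarrow> (nat \<Rightarrow> nat) \<Rightarrow> bool" where
  "null_labels n A a \<longleftrightarrow> (\<forall>i\<le>n. a i > 0) \<and> (\<forall>i\<le>n. (\<Sum>j\<le>n. A i j * int (a j)) = 0)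
      \<and> Gcd (a ` {..n}) = 1"

definition conull_labels :: "nat \<Rightarrow> (nat \<Rightarrow> nat \<Rightarrow> int) \<Rightarrow> (nat \<Rightarrow> nat) \<Rightarrow> bool" where
  "conull_labels n A av \<longleftrightarrow> (\<forall>i\<le>n. av i > 0) \<and> (\<forall>j\<le>n. (\<Sum>i\<le>n. int (av i) * A i j) = 0)
      \<and> Gcd (av ` {..n}) = 1"

text \<open>Realization: h^* is the real vector space 'v of dimension n+2, h is identified with
the (linear) dual of h^*, so the coroots are linear functionals cor i on 'v and the pairing
<mu, alpha_i^v> is cor i mu.\<close>
definition realization ::
  "nat \<Rightarrow> (nat \<Rightarrow> nat \<Rightarrow> int) \<Rightarrow> (nat \<Rightarrow> 'v::euclidean_space) \<Rightarrow> (nat \<Rightarrow> 'v \<Rightarrow> real) \<Rightarrow> bool" where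
  "realization n A \<alpha> cor \<longleftrightarrow> DIM('v) = n + 2 \<and> (\<forall>i\<le>n. linear (cor i)) \<and>
     (\<forall>c::nat \<Rightarrow> real. (\<Sum>i\<le>n. c i *\<^sub>R \<alpha> i) = 0 \<longrightarrow> (\<forall>i\<le>n. c i = 0)) \<and>
     (\<forall>c::nat \<Rightarrow> real. (\<forall>v. (\<Sum>i\<le>n. c i * cor i v) = 0) \<longrightarrow> (\<forall>i\<le>n. c i = 0)) \<and>
     (\<forall>i\<le>n. \<forall>j\<le>n. cor i (\<alpha> j) = of_int (A i j))"

text \<open>delta, c (as the functional <-, c>), and the Coxeter number h.\<close>
definition delta :: "nat \<Rightarrow> (nat \<Rightarrow> nat) \<Rightarrow> (nat \<Rightarrow> 'v::real_vector) \<Rightarrow> 'v" where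
  "delta n a \<alpha> = (\<Sum>i\<le>n. real (a i) *\<^sub>R \<alpha> i)"

definition cpair :: "nat \<Rightarrow> (nat \<Rightarrow> nat) \<Rightarrow> (nat \<Rightarrow> 'v \<Rightarrow> real) \<Rightarrow> 'v \<Rightarrow> real" where
  "cpair n av cor v = (\<Sum>i\<le>n. real (av i) * cor i v)"

definition coxeter_number :: "nat \<Rightarrow> (nat \<Rightarrow> nat) \<Rightarrow> nat" where
  "coxeter_number n a = (\<Sum>i\<le>n. a i)"

definition V0 :: "nat \<Rightarrow> (nat \<Rightarrow> 'v::real_vector) \<Rightarrow> 'v set" where
  "V0 n \<alpha> = span (\<alpha> ` {1..n})"

definition std_form :: "nat \<Rightarrow> (nat \<Rightarrow> nat) \<Rightarrow> (nat \<Rightarrow> nat) \<Rightarrow> (nat \<Rightarrow> 'v::real_vector)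
    \<Rightarrow> (nat \<Rightarrow> 'v \<Rightarrow> real) \<Rightarrow> ('v \<Rightarrow> 'v \<Rightarrow> real) \<Rightarrow> bool" where
  "std_form n a av \<alpha> cor B \<longleftrightarrow> bilinear B \<and> (\<forall>v w. B v w = B w v) \<and>
     (\<forall>i\<le>n. \<forall>v. B v (\<alpha> i) = (real (av i) / real (a i)) * cor i v)"

definition srefl :: "(nat \<Rightarrow> 'v::real_vector) \<Rightarrow> (nat \<Rightarrow> 'v \<Rightarrow> real) \<Rightarrow> nat \<Rightarrow> 'v \<Rightarrow> 'v" where
  "srefl \<alpha> cor i v = v - cor i v *\<^sub>R \<alpha> i"

inductive_set W0 :: "nat \<Rightarrow> (nat \<Rightarrow> 'v::real_vector) \<Rightarrow> (nat \<Rightarrow> 'v \<Rightarrow> real) \<Rightarrow> ('v \<Rightarrow> 'v) set"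
  for n \<alpha> cor where
  W0_id: "id \<in> W0 n \<alpha> cor"
| W0_step: "w \<in> W0 n \<alpha> cor \<Longrightarrow> 1 \<le> i \<Longrightarrow> i \<le> n \<Longrightarrow> srefl \<alpha> cor i \<circ> w \<in> W0 n \<alpha> cor"

definition transl :: "nat \<Rightarrow> (nat \<Rightarrow> nat) \<Rightarrow> (nat \<Rightarrow> nat) \<Rightarrow> (nat \<Rightarrow> 'v::real_vector)
    \<Rightarrow> (nat \<Rightarrow> 'v \<Rightarrow> real) \<Rightarrow> ('v \<Rightarrow> 'v \<Rightarrow> real) \<Rightarrow> 'v \<Rightarrow> 'v \<Rightarrow> 'v" where
  "transl n a av \<alpha> cor B x v = v + cpair n av cor v *\<^sub>R x
      - (B v x + (1/2) * B x x * cpair n av cor v) *\<^sub>R delta n a \<alpha>"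

text \<open>L_mu(g) = <mu - g mu, rho^v>, with rho^v given as a linear functional rho on h^*.\<close>
definition Lfun :: "('v::real_vector \<Rightarrow> real) \<Rightarrow> 'v \<Rightarrow> ('v \<Rightarrow> 'v) \<Rightarrow> real" where
  "Lfun rho \<mu> g = rho (\<mu> - g \<mu>)"

end

theory Submission
  imports Defs
begin

theorem theorem2p4:
  fixes n :: nat and A :: "nat \<Rightarrow> nat \<Rightarrow> int" and a av :: "nat \<Rightarrow> nat"
    and \<alpha> :: "nat \<Rightarrow> 'v::euclidean_space" and cor :: "nat \<Rightarrow> 'v \<Rightarrow> real"
    and B :: "'v \<Rightarrow> 'v \<Rightarrow> real" and rho :: "'v \<Rightarrow> real"
    and \<Lambda>0 lam \<Lambda> x y :: 'v and u :: "'v \<Rightarrow> 'v" and lev :: nat and z :: int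
  assumes aff: "affine_type n A"
    and a: "null_labels n A a" and av: "conull_labels n A av" and av0: "av 0 = 1"
    and real: "realization n A \<alpha> cor"
    and form: "std_form n a av \<alpha> cor B"
    and rho: "linear rho" "\<forall>i\<le>n. rho (\<alpha> i) = 1"
    and Lam0: "\<forall>j\<le>n. cor j \<Lambda>0 = (if j = 0 then 1 else 0)"
    and lam: "lam \<in> V0 n \<alpha>" "\<forall>i\<in>{1..n}. \<exists>k::nat. cor i lam = real k"
    and Lam: "\<Lambda> = lam + real lev *\<^sub>R \<Lambda>0 + real_of_int z *\<^sub>R delta n a \<alpha>"
      "\<forall>i\<le>n. \<exists>k::nat. cor i \<Lambda> = real k"
      "cpair n av cor \<Lambda> = real lev"
    and xy: "x \<in> V0 n \<alpha>" "y \<in> V0 n \<alpha>"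
    and u: "u \<in> W0 n \<alpha> cor"
  shows "Lfun rho \<Lambda> (transl n a av \<alpha> cor B (x + y) \<circ> u)
           = Lfun rho \<Lambda> (transl n a av \<alpha> cor B x \<circ> u) + Lfun rho \<Lambda> (transl n a av \<alpha> cor B y \<circ> u)
             + (real (coxeter_number n a) * real lev * B x y - Lfun rho lam u)
       \<and> (\<forall>i\<le>n. \<forall>\<omega>. \<omega> \<in> V0 n \<alpha> \<and> (\<forall>j\<in>{1..n}. cor j \<omega> = (if j = i then 1 else 0)) \<longrightarrow>
            (let \<Lambda>i = (real (av i) / real (av 0)) *\<^sub>R \<Lambda>0 + \<omega> in
             Lfun rho \<Lambda>i (transl n a av \<alpha> cor B x \<circ> transl n a av \<alpha> cor B y)
              = Lfun rho \<Lambda>i (transl n a av \<alpha> cor B x) + Lfun rho \<Lambda>i (transl n a av \<alpha> cor B y)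
                + real (coxeter_number n a) * (real (av i) / real (av 0)) * B x y))"
proof -
  define c where "c = cpair n av cor"
  define d where "d = delta n a \<alpha>"
  define h where "h = real (coxeter_number n a)"
  have corlin: "\<And>i. i \<le> n \<Longrightarrow> linear (cor i)" using real unfolding realization_def by blast
  have corA: "\<And>i j. i \<le> n \<Longrightarrow> j \<le> n \<Longrightarrow> cor i (\<alpha> j) = of_int (A i j)"
    using real unfolding realization_def by blast
  have clin: "linear c" unfolding c_def cpair_def
    by (intro linear_compose_sum) (auto intro!: linearI simp: linear_add[OF corlin] linear_scale[OF corlin] algebra_simps)
  have calpha: "c (\<alpha> j) = 0" if "j \<le> n" for j
  proof -
    have "c (\<alpha> j) = (\<Sum>i\<le>n. real (av i) * of_int (A i j))"
      unfolding c_def cpair_def using corA that by simp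
    also have "\<dots> = of_int (\<Sum>i\<le>n. int (av i) * A i j)" by simp
    also have "\<dots> = 0" using av that unfolding conull_labels_def by simp
    finally show ?thesis .
  qed
  have cord: "cor i d = 0" if "i \<le> n" for i
  proof -
    have "cor i d = (\<Sum>j\<le>n. real (a j) * cor i (\<alpha> j))"
      unfolding d_def delta_def by (simp add: linear_sum[OF corlin[OF that]] linear_scale[OF corlin[OF that]])
    also have "\<dots> = of_int (\<Sum>j\<le>n. A i j * int (a j))" using corA that
      by (simp add: mult.commute)
    also have "\<dots> = 0" using a that unfolding null_labels_def by simp
    finally show ?thesis .
  qed
  have cd: "c d = 0" unfolding c_def cpair_def using cord by simp
  have cV0: "c v = 0" if "v \<in> V0 n \<alpha>" for v
    using linear_eq_0_on_span[OF clin, of "\<alpha> ` {1..n}" v] that calpha unfolding V0_def by force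
  have rhod: "rho d = h" unfolding d_def delta_def h_def coxeter_number_def
    using rho(2) by (simp add: linear_sum[OF rho(1)] linear_scale[OF rho(1)])
  have Bd: "B v d = c v" for v
  proof -
    have bl: "bilinear B" and Bs: "\<And>i v. i \<le> n \<Longrightarrow> B v (\<alpha> i) = (real (av i) / real (a i)) * cor i v"
      using form unfolding std_form_def by auto
    have apos: "\<And>i. i \<le> n \<Longrightarrow> a i > 0" using a unfolding null_labels_def by auto
    have "B v d = (\<Sum>i\<le>n. real (a i) * B v (\<alpha> i))"
      unfolding d_def delta_def using bl unfolding bilinear_def
      by (simp add: linear_sum[of "B v"] linear_scale[of "B v"])
    also have "\<dots> = (\<Sum>i\<le>n. real (av i) * cor i v)"
      by (rule sum.cong) (auto simp: Bs apos)
    finally show ?thesis unfolding c_def cpair_def .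
  qed
  have bl: "bilinear B" and Bsym: "\<And>v w. B v w = B w v" using form unfolding std_form_def by auto
  have cL0: "c \<Lambda>0 = 1"
  proof -
    have "c \<Lambda>0 = (\<Sum>i\<le>n. if i = 0 then 1 else 0)" unfolding c_def cpair_def
      by (rule sum.cong) (use Lam0 av0 in auto)
    also have "\<dots> = 1" by simp
    finally show ?thesis .
  qed
  have Wprops: "linear w \<and> (\<forall>v. c (w v) = c v) \<and> w \<Lambda>0 = \<Lambda>0 \<and> w d = d" if "w \<in> W0 n \<alpha> cor" for w
    using that
  proof (induction rule: W0.induct)
    case W0_id
    have "linear (id :: 'v \<Rightarrow> 'v)" by (rule linearI) auto
    then show ?case by (simp add: id_def)
  next
    case (W0_step w i)
    have li: "linear (srefl \<alpha> cor i)" unfolding srefl_def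
      using corlin[of i] W0_step
      by (intro linearI) (auto simp: linear_add[OF corlin] linear_scale[OF corlin] algebra_simps)
    have "c (srefl \<alpha> cor i v) = c v" for v
      unfolding srefl_def using linear_diff[OF clin] linear_scale[OF clin] calpha[of i] W0_step by simp
    moreover have "srefl \<alpha> cor i \<Lambda>0 = \<Lambda>0" unfolding srefl_def using Lam0 W0_step by simp
    moreover have "srefl \<alpha> cor i d = d" unfolding srefl_def using cord W0_step by simp
    moreover have "linear (srefl \<alpha> cor i \<circ> w)" using linear_compose[OF _ li] W0_step by blast
    ultimately show ?case using W0_step by (simp del: o_apply add: o_def)
  qed
  define t where "t = transl n a av \<alpha> cor B"
  have tdef: "t x' v = v + c v *\<^sub>R x' - (B v x' + (1/2) * B x' x' * c v) *\<^sub>R d" for x' v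
    unfolding t_def transl_def c_def d_def by simp
  note lr = linear_add[OF rho(1)] linear_diff[OF rho(1)] linear_scale[OF rho(1)]
  note bB = bilinear_ladd[OF bl] bilinear_radd[OF bl] bilinear_lmul[OF bl] bilinear_rmul[OF bl]
     bilinear_lsub[OF bl] bilinear_rsub[OF bl]
  have rt: "rho (w - t x' v) = rho w - rho v - c v * rho x' + (B v x' + (1/2) * B x' x' * c v) * h" for w v x'
    unfolding tdef by (simp add: lr rhod algebra_simps)
  have part1: "Lfun rho \<Lambda> (t (x + y) \<circ> u) = Lfun rho \<Lambda> (t x \<circ> u) + Lfun rho \<Lambda> (t y \<circ> u)
             + (h * real lev * B x y - Lfun rho lam u)"
  proof -
    obtain ul: "linear u" and uc: "\<And>v. c (u v) = c v" and uL: "u \<Lambda>0 = \<Lambda>0" and ud: "u d = d"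
      using Wprops[OF u] by blast
    have uLam: "u \<Lambda> = u lam + real lev *\<^sub>R \<Lambda>0 + real_of_int z *\<^sub>R d"
      unfolding Lam(1) d_def[symmetric] using linear_add[OF ul] linear_scale[OF ul] uL ud by simp
    have cuL: "c (u \<Lambda>) = real lev" using uc Lam(3) c_def by simp
    have key: "rho \<Lambda> - rho (u \<Lambda>) = rho lam - rho (u lam)"
    proof -
      have "rho \<Lambda> = rho lam + real lev * rho \<Lambda>0 + real_of_int z * rho d"
        unfolding Lam(1) d_def[symmetric] by (simp add: lr)
      moreover have "rho (u \<Lambda>) = rho (u lam) + real lev * rho \<Lambda>0 + real_of_int z * rho d"
        unfolding uLam by (simp add: lr)
      ultimately show ?thesis by simp
    qed
    have "B x y = B y x" by (rule Bsym)
    moreover have "rho (lam - u lam) = rho lam - rho (u lam)" by (rule linear_diff[OF rho(1)])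
    moreover have "rho (x + y) = rho x + rho y" by (rule linear_add[OF rho(1)])
    ultimately show ?thesis unfolding Lfun_def o_def rt cuL using key
      by (simp add: bB algebra_simps)
  qed
  have part2: "Lfun rho \<Lambda>i (t x \<circ> t y) = Lfun rho \<Lambda>i (t x) + Lfun rho \<Lambda>i (t y)
                + h * (real (av i) / real (av 0)) * B x y"
    if "i \<le> n" "\<omega> \<in> V0 n \<alpha>" "\<Lambda>i = (real (av i) / real (av 0)) *\<^sub>R \<Lambda>0 + \<omega>" for i \<omega> \<Lambda>i
  proof -
    have cLi: "c \<Lambda>i = real (av i)" using that(3) cV0[OF that(2)] cL0 av0
      linear_add[OF clin] linear_scale[OF clin] by simp
    have cx: "c x = 0" and cy: "c y = 0" using cV0 xy by auto
    have Bxd: "B x d = 0" "B d x = 0" using Bd[of x] cx Bsym[of d x] by auto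
    have cty: "c (t y v) = c v" for v unfolding tdef
      using linear_add[OF clin] linear_diff[OF clin] linear_scale[OF clin] cy cd by simp
    have "B x y = B y x" by (rule Bsym)
    have ty: "t y \<Lambda>i = \<Lambda>i + c \<Lambda>i *\<^sub>R y - (B \<Lambda>i y + (1/2) * B y y * c \<Lambda>i) *\<^sub>R d"
      by (rule tdef)
    have "B (t y \<Lambda>i) x = B \<Lambda>i x + c \<Lambda>i * B y x"
      unfolding ty by (simp add: bB Bxd)
    moreover have "rho (t y \<Lambda>i) = rho \<Lambda>i + c \<Lambda>i * rho y - (B \<Lambda>i y + (1/2) * B y y * c \<Lambda>i) * h"
      unfolding ty by (simp add: lr rhod)
    ultimately show ?thesis using \<open>B x y = B y x\<close> unfolding Lfun_def o_def rt cty cLi av0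
      by (simp add: algebra_simps)
  qed
  show ?thesis using part1 part2 unfolding t_def h_def Let_def by blast
qed

end
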